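(* Let $1\le b<\frac{n}{2}-1$ and let $T$ be a tree attaining the maximum value of $M_2$ over $\mathcal{CT}^*_{n,b}$. If $T$ contains a pendent vertex adjacent to a vertex of degree $4$, then $T$ contains no two adjacent vertices of degree $3$.
   Context: A chemical tree is a tree with maximum degree at most $4$. A pendent vertex has degree $1$; a branching vertex has degree greater than $2$. $\mathcal{CT}^*_{n,b}$ is the class of all $n$-vertex chemical trees with exactly $b$ branching vertices. $M_2(G)=\sum_{uv\in E(G)}d_ud_v$, where $d_v$ is the degree of $v$. *)

theory Defs
  imports Complex_Main
begin

definition simple_graph :: "nat set \<Rightarrow> nat set set \<Rightarrow> bool" where
  "simple_graph V E \<longleftrightarrow> finite V \<and> (\<forall>e\<in>E. e \<subseteq> V \<and> card e = 2)"

definition deg :: "nat set set \<Rightarrow> nat \<Rightarrow> nat" where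
  "deg E v = card {e\<in>E. v \<in> e}"

definition adj_rel :: "nat set set \<Rightarrow> (nat \<times> nat) set" where
  "adj_rel E = {(x, y). {x, y} \<in> E}"

definition connected_graph :: "nat set \<Rightarrow> nat set set \<Rightarrow> bool" where
  "connected_graph V E \<longleftrightarrow> (\<forall>u\<in>V. \<forall>v\<in>V. (u, v) \<in> (adj_rel E)\<^sup>*)"

definition is_tree :: "nat set \<Rightarrow> nat set set \<Rightarrow> bool" where
  "is_tree V E \<longleftrightarrow> simple_graph V E \<and> V \<noteq> {} \<and> connected_graph V E
     \<and> card E + 1 = card V"

definition chemical_tree :: "nat set \<Rightarrow> nat set set \<Rightarrow> bool" where
  "chemical_tree V E \<longleftrightarrow> is_tree V E \<and> (\<forall>v\<in>V. deg E v \<le> 4)"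

definition branching_vertices :: "nat set \<Rightarrow> nat set set \<Rightarrow> nat set" where
  "branching_vertices V E = {v\<in>V. deg E v > 2}"

definition CT :: "nat \<Rightarrow> nat \<Rightarrow> (nat set \<times> nat set set) set" where
  "CT n b = {(V, E). chemical_tree V E \<and> card V = n \<and> card (branching_vertices V E) = b}"

definition M2 :: "nat set set \<Rightarrow> nat" where
  "M2 E = (\<Sum>e\<in>E. \<Prod>v\<in>e. deg E v)"

end

theory Submission
  imports Defs
begin


lemma adj_iff[simp]: "(a,b) \<in> adj_rel E \<longleftrightarrow> {a,b} \<in> E" by (simp add: adj_rel_def)

lemma adj_mono: "E1 \<subseteq> E2 \<Longrightarrow> (a,b) \<in> (adj_rel E1)\<^sup>* \<Longrightarrow> (a,b) \<in> (adj_rel E2)\<^sup>*"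
proof -
  assume "E1 \<subseteq> E2" "(a,b) \<in> (adj_rel E1)\<^sup>*"
  moreover have "adj_rel E1 \<subseteq> adj_rel E2" using \<open>E1 \<subseteq> E2\<close> by (auto simp: adj_rel_def)
  ultimately show ?thesis using rtrancl_mono by blast
qed

lemma adj_sym: "(a,b) \<in> (adj_rel E)\<^sup>* \<Longrightarrow> (b,a) \<in> (adj_rel E)\<^sup>*"
proof (induction rule: rtrancl_induct)
  case base then show ?case by simp
next
  case (step c d)
  have "(d,c) \<in> adj_rel E" using step(2) by (simp add: insert_commute)
  then show ?case using step(3) by (rule converse_rtrancl_into_rtrancl)
qed

lemma split_edge:
  assumes "(a,b) \<in> (adj_rel E)\<^sup>*"
  shows "(a,b) \<in> (adj_rel (E - {{p,q}}))\<^sup>* \<or> (a,p) \<in> (adj_rel (E - {{p,q}}))\<^sup>* \<or> (a,q) \<in> (adj_rel (E - {{p,q}}))\<^sup>*"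
  using assms
proof (induction rule: rtrancl_induct)
  case base then show ?case by simp
next
  case (step c d)
  show ?case
  proof (cases "(a,c) \<in> (adj_rel (E - {{p,q}}))\<^sup>*")
    case True
    show ?thesis
    proof (cases "{c,d} = {p,q}")
      case True2: True
      then have "c = p \<or> c = q" by (metis doubleton_eq_iff)
      then show ?thesis using True by auto
    next
      case False
      then have "(c,d) \<in> adj_rel (E - {{p,q}})" using step(2) by simp
      then show ?thesis using True by (meson rtrancl_into_rtrancl)
    qed
  next
    case False then show ?thesis using step(3) by blast
  qed
qed

lemma isolated:
  assumes "\<forall>e\<in>G. u \<notin> e" "(u,b) \<in> (adj_rel G)\<^sup>*" shows "b = u"
  using assms(2) by (cases rule: converse_rtranclE) (use assms(1) in auto)

definition reach :: "nat set set \<Rightarrow> nat \<Rightarrow> nat set" where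
  "reach F a = {b. (a,b) \<in> (adj_rel F)\<^sup>*}"
definition inside :: "nat set set \<Rightarrow> nat set \<Rightarrow> nat set set" where
  "inside F K = {e\<in>F. e \<subseteq> K}"

lemma reach_sub: "reach F a \<subseteq> insert a (\<Union>F)"
  unfolding reach_def
proof
  fix b assume "b \<in> {b. (a,b) \<in> (adj_rel F)\<^sup>*}"
  then have "(a,b) \<in> (adj_rel F)\<^sup>*" by simp
  then show "b \<in> insert a (\<Union>F)" by (induction rule: rtrancl_induct) auto
qed

lemma reach_finite: "finite F \<Longrightarrow> \<forall>e\<in>F. card e = 2 \<Longrightarrow> finite (reach F a)"
proof -
  assume "finite F" "\<forall>e\<in>F. card e = 2"
  then have "finite (\<Union>F)" by (metis card.infinite finite_Union zero_neq_numeral)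
  then show ?thesis using reach_sub by (meson finite_insert finite_subset)
qed

lemma closure_lem:
  assumes "p \<in> U" "\<forall>c d. c \<in> U \<longrightarrow> (c,d) \<in> adj_rel F \<longrightarrow> d \<in> U" "(p,b) \<in> (adj_rel F)\<^sup>*"
  shows "b \<in> U"
  using assms(3) by (induction rule: rtrancl_induct) (use assms(1,2) in blast)+

lemma count_reach:
  assumes "finite F" "\<forall>e\<in>F. card e = 2"
  shows "card (reach F a) \<le> card (inside F (reach F a)) + 1"
  using assms
proof (induction F arbitrary: a rule: finite_induct)
  case empty
  have "reach {} a = {a}" unfolding reach_def adj_rel_def by auto
  then show ?case by simp
next
  case (insert e F)
  from insert.prems have ce: "card e = 2" and F2: "\<forall>e\<in>F. card e = 2" by auto
  then obtain p q where e: "e = {p,q}" and pq: "p \<noteq> q" by (meson card_2_iff)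
  let ?E = "insert e F"
  define K where "K = reach ?E a"
  have finE: "finite (inside ?E K)" using insert.hyps unfolding inside_def by simp
  have "card K \<le> card (inside ?E K) + 1"
  proof (cases "p \<in> K \<or> q \<in> K")
    case False
    have "K \<subseteq> reach F a"
    proof
      fix b assume "b \<in> K"
      then have "(a,b) \<in> (adj_rel ?E)\<^sup>*" by (simp add: K_def reach_def)
      then show "b \<in> reach F a"
      proof (induction rule: rtrancl_induct)
        case base then show ?case by (simp add: reach_def)
      next
        case (step c d)
        have "c \<in> K" using step(1) by (simp add: K_def reach_def)
        then have "{c,d} \<noteq> e" using False e by auto
        then have "(c,d) \<in> adj_rel F" using step(2) by simp
        then show ?case using step(3) unfolding reach_def by (meson mem_Collect_eq rtrancl_into_rtrancl)
      qed
    qed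
    moreover have "reach F a \<subseteq> K" unfolding K_def reach_def using adj_mono[of F ?E] by auto
    ultimately have KF: "K = reach F a" by auto
    have "inside ?E K = inside F K" using False e unfolding inside_def by auto
    then show ?thesis using insert.IH[OF F2, of a] KF by simp
  next
    case True
    have eE: "(p,q) \<in> adj_rel ?E" "(q,p) \<in> adj_rel ?E" using e by (auto simp: insert_commute)
    have pK: "(a,p) \<in> (adj_rel ?E)\<^sup>*" and qK: "(a,q) \<in> (adj_rel ?E)\<^sup>*"
      using True eE unfolding K_def reach_def by (meson mem_Collect_eq rtrancl_into_rtrancl)+
    have Ksplit: "K = reach F p \<union> reach F q"
    proof
      show "reach F p \<union> reach F q \<subseteq> K"
      proof
        fix b assume "b \<in> reach F p \<union> reach F q"
        then have "(p,b) \<in> (adj_rel ?E)\<^sup>* \<or> (q,b) \<in> (adj_rel ?E)\<^sup>*"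
          unfolding reach_def using adj_mono[of F ?E] by auto
        then show "b \<in> K" unfolding K_def reach_def using pK qK by (meson mem_Collect_eq rtrancl_trans)
      qed
    next
      show "K \<subseteq> reach F p \<union> reach F q"
      proof
        fix b assume "b \<in> K"
        then have "(a,b) \<in> (adj_rel ?E)\<^sup>*" by (simp add: K_def reach_def)
        then have pb: "(p,b) \<in> (adj_rel ?E)\<^sup>*" using adj_sym[OF pK] by (meson rtrancl_trans)
        have "\<forall>c d. c \<in> reach F p \<union> reach F q \<longrightarrow> (c,d) \<in> adj_rel ?E \<longrightarrow> d \<in> reach F p \<union> reach F q"
        proof (intro allI impI)
          fix c d assume c: "c \<in> reach F p \<union> reach F q" and cd: "(c,d) \<in> adj_rel ?E"
          show "d \<in> reach F p \<union> reach F q"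
          proof (cases "{c,d} = e")
            case True
            then have "d = p \<or> d = q" using e by (metis doubleton_eq_iff)
            then show ?thesis by (auto simp: reach_def)
          next
            case False
            then have "(c,d) \<in> adj_rel F" using cd by simp
            have "\<And>z. (z,c) \<in> (adj_rel F)\<^sup>* \<Longrightarrow> (z,d) \<in> (adj_rel F)\<^sup>*"
              using \<open>(c,d) \<in> adj_rel F\<close> by (meson rtrancl_into_rtrancl)
            then show ?thesis using c unfolding reach_def by blast
          qed
        qed
        moreover have "p \<in> reach F p \<union> reach F q" by (simp add: reach_def)
        ultimately show "b \<in> reach F p \<union> reach F q" using closure_lem pb by metis
      qed
    qed
    show ?thesis
    proof (cases "q \<in> reach F p")
      case True
      then have "reach F q \<subseteq> reach F p" unfolding reach_def by (auto intro: rtrancl_trans)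
      with Ksplit have KP: "K = reach F p" by auto
      have "inside F K \<subseteq> inside ?E K" by (auto simp: inside_def)
      then have "card (inside F K) \<le> card (inside ?E K)" using card_mono finE by blast
      with insert.IH[OF F2, of p] KP show ?thesis by simp
    next
      case False
      have disj: "reach F p \<inter> reach F q = {}"
      proof (rule ccontr)
        assume "reach F p \<inter> reach F q \<noteq> {}"
        then obtain c where "(p,c) \<in> (adj_rel F)\<^sup>*" "(q,c) \<in> (adj_rel F)\<^sup>*" by (auto simp: reach_def)
        then have "(p,q) \<in> (adj_rel F)\<^sup>*" using adj_sym by (meson rtrancl_trans)
        then show False using False by (simp add: reach_def)
      qed
      have fp: "finite (reach F p)" and fq: "finite (reach F q)" using reach_finite insert.hyps(1) F2 by auto
      have cK: "card K = card (reach F p) + card (reach F q)" using Ksplit disj fp fq card_Un_disjoint by metis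
      define Ip where "Ip = inside F (reach F p)"
      define Iq where "Iq = inside F (reach F q)"
      have fIp: "finite Ip" and fIq: "finite Iq" using insert.hyps(1) by (auto simp: Ip_def Iq_def inside_def)
      have dI: "Ip \<inter> Iq = {}"
      proof (rule ccontr)
        assume "Ip \<inter> Iq \<noteq> {}"
        then obtain f where "f \<in> F" "f \<subseteq> reach F p" "f \<subseteq> reach F q" by (auto simp: Ip_def Iq_def inside_def)
        then have "f = {}" using disj by auto
        then show False using F2 \<open>f \<in> F\<close> by auto
      qed
      have eI: "e \<notin> Ip \<union> Iq" using insert.hyps(2) by (auto simp: Ip_def Iq_def inside_def)
      have cI: "card (insert e (Ip \<union> Iq)) = card Ip + card Iq + 1"
        using eI dI fIp fIq by (simp add: card_Un_disjoint)
      have sub: "insert e (Ip \<union> Iq) \<subseteq> inside ?E K"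
        using Ksplit True e pK qK unfolding Ip_def Iq_def inside_def K_def reach_def by auto
      have "card (insert e (Ip \<union> Iq)) \<le> card (inside ?E K)" using card_mono[OF finE sub] .
      moreover have "card (reach F p) \<le> card Ip + 1" using insert.IH[OF F2, of p] by (simp add: Ip_def)
      moreover have "card (reach F q) \<le> card Iq + 1" using insert.IH[OF F2, of q] by (simp add: Iq_def)
      ultimately show ?thesis using cK cI by linarith
    qed
  qed
  then show ?case by (simp add: K_def)
qed



lemma bridge:
  assumes T: "is_tree V E" and xy: "{x,y} \<in> E"
  shows "(x,y) \<notin> (adj_rel (E - {{x,y}}))\<^sup>*"
proof
  assume R: "(x,y) \<in> (adj_rel (E - {{x,y}}))\<^sup>*"
  let ?E2 = "E - {{x,y}}"
  have fV: "finite V" and sub: "\<forall>e\<in>E. e \<subseteq> V \<and> card e = 2" and con: "connected_graph V E"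
    and cE: "card E + 1 = card V"
    using T by (auto simp: is_tree_def simple_graph_def)
  have fE: "finite E" by (rule finite_subset[of E "Pow V"]) (use sub fV in auto)
  have xV: "x \<in> V" using sub xy by auto
  have "V \<subseteq> reach ?E2 x"
  proof
    fix w assume "w \<in> V"
    then have "(w,x) \<in> (adj_rel E)\<^sup>*" using con xV unfolding connected_graph_def by blast
    from split_edge[OF this, of x y] have
      "(w,x) \<in> (adj_rel ?E2)\<^sup>* \<or> (w,y) \<in> (adj_rel ?E2)\<^sup>*" by blast
    then have "(w,x) \<in> (adj_rel ?E2)\<^sup>*" using adj_sym[OF R] by (meson rtrancl_trans)
    then have "(x,w) \<in> (adj_rel ?E2)\<^sup>*" by (rule adj_sym)
    then show "w \<in> reach ?E2 x" by (simp add: reach_def)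
  qed
  moreover have "reach ?E2 x \<subseteq> V"
  proof -
    have "\<Union>?E2 \<subseteq> V" using sub by blast
    then show ?thesis using reach_sub[of ?E2 x] xV by blast
  qed
  ultimately have RV: "reach ?E2 x = V" by blast
  have fE2: "finite ?E2" using fE by blast
  have s2: "\<forall>e\<in>?E2. card e = 2" using sub by blast
  have "card (reach ?E2 x) \<le> card (inside ?E2 (reach ?E2 x)) + 1" by (rule count_reach[OF fE2 s2])
  then have "card V \<le> card (inside ?E2 V) + 1" by (simp only: RV)
  moreover have "card (inside ?E2 V) \<le> card ?E2" using fE2 by (intro card_mono) (auto simp: inside_def)
  moreover have "card ?E2 = card E - 1" using fE xy by simp
  moreover have "card E \<ge> 1" using fE xy by (auto simp: card_gt_0_iff Suc_le_eq)
  ultimately show False using cE by linarith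
qed

lemma deg_sum:
  assumes "finite E" shows "deg E w = (\<Sum>e\<in>E. if w \<in> e then 1 else 0)"
proof -
  have "deg E w = (\<Sum>e\<in>{e\<in>E. w \<in> e}. 1)" unfolding deg_def by (rule card_eq_sum)
  also have "\<dots> = (\<Sum>e\<in>E. if w \<in> e then 1 else 0)" using assms by (rule sum.inter_filter)
  finally show ?thesis .
qed

lemma core:
  assumes ct: "(V,E) \<in> CT n b" and opt: "\<forall>(V', E') \<in> CT n b. M2 E' \<le> M2 E"
  and uv: "{u,v} \<in> E" and du: "deg E u = 1" and dv: "deg E v = 4"
  and xy: "{x,y} \<in> E" and dx: "deg E x = 3" and dy: "deg E y = 3"
  and vy: "(v,y) \<in> (adj_rel (E - {{x,y}}))\<^sup>*"
  shows False
proof -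
  have T: "is_tree V E" and d4: "\<forall>w\<in>V. deg E w \<le> 4" and cV: "card V = n"
    and cb: "card (branching_vertices V E) = b"
    using ct by (auto simp: CT_def chemical_tree_def)
  have fV: "finite V" and sub: "\<forall>e\<in>E. e \<subseteq> V \<and> card e = 2" and con: "connected_graph V E"
    and cE: "card E + 1 = card V" and Vne: "V \<noteq> {}"
    using T by (auto simp: is_tree_def simple_graph_def)
  have fE: "finite E" by (rule finite_subset[of E "Pow V"]) (use sub fV in auto)
  have "card {u,v} = 2" using sub uv by blast
  then have uvne: "u \<noteq> v" by (cases "u = v") auto
  have "card {x,y} = 2" using sub xy by blast
  then have xyne: "x \<noteq> y" by (cases "x = y") auto
  have vx: "v \<noteq> x" "v \<noteq> y" "u \<noteq> x" "u \<noteq> y" using du dv dx dy by auto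
  have inV: "u \<in> V" "v \<in> V" "x \<in> V" "y \<in> V" using sub uv xy by auto
  have uedges: "{e\<in>E. u \<in> e} = {{u,v}}"
  proof -
    have "card {e\<in>E. u \<in> e} = 1" using du by (simp add: deg_def)
    then obtain s where s: "{e\<in>E. u \<in> e} = {s}" by (rule card_1_singletonE)
    moreover have "{u,v} \<in> {e\<in>E. u \<in> e}" using uv by simp
    ultimately show ?thesis by auto
  qed
  have yu_notin: "{y,u} \<notin> E"
  proof
    assume "{y,u} \<in> E"
    then have "{y,u} \<in> {e\<in>E. u \<in> e}" by simp
    then have "{y,u} = {u,v}" using uedges by auto
    then have "y \<in> {u,v}" by blast
    then show False using vx by blast
  qed
  have vx_notin: "{v,x} \<notin> E"
  proof
    assume "{v,x} \<in> E"
    moreover have "{x,v} = {v,x}" by (rule insert_commute)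
    moreover have "{x,v} \<noteq> {x,y}"
    proof
      assume "{x,v} = {x,y}"
      then have "v \<in> {x,y}" by blast
      then show False using vx by blast
    qed
    ultimately have "{x,v} \<in> E - {{x,y}}" by simp
    then have "(x,v) \<in> adj_rel (E - {{x,y}})" by simp
    then have "(x,y) \<in> (adj_rel (E - {{x,y}}))\<^sup>*" using vy by (meson converse_rtrancl_into_rtrancl)
    then show False using bridge[OF T xy] by simp
  qed
  define D where "D = E - {{u,v},{x,y}}"
  define E' where "E' = insert {v,x} (insert {y,u} D)"
  have fD: "finite D" using fE by (simp add: D_def)
  have DE: "D \<subseteq> E" by (auto simp: D_def)
  have DE': "D \<subseteq> E'" by (auto simp: E'_def)
  have ne1: "{u,v} \<noteq> {x,y}"
  proof
    assume "{u,v} = {x,y}"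
    then have "u \<in> {x,y}" by blast
    then show False using vx by blast
  qed
  have ne2: "{v,x} \<noteq> {y,u}"
  proof
    assume "{v,x} = {y,u}"
    then have "v \<in> {y,u}" by blast
    then show False using vx uvne by blast
  qed
  have nD1: "{v,x} \<notin> D" using vx_notin DE by auto
  have nD2: "{y,u} \<notin> D" using yu_notin DE by auto
  have sumE: "sum f E = f {u,v} + f {x,y} + sum f D" for f :: "nat set \<Rightarrow> nat"
  proof -
    have "sum f E = f {u,v} + sum f (E - {{u,v}})" using fE uv by (simp add: sum.remove)
    also have "sum f (E - {{u,v}}) = f {x,y} + sum f (E - {{u,v}} - {{x,y}})"
      using fE xy ne1 by (subst sum.remove[of _ "{x,y}"]) auto
    also have "E - {{u,v}} - {{x,y}} = D" by (auto simp: D_def)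
    finally show ?thesis by simp
  qed
  have sumE': "sum f E' = f {v,x} + f {y,u} + sum f D" for f :: "nat set \<Rightarrow> nat"
    using fD nD1 nD2 ne2 by (simp add: E'_def)
  have fE': "finite E'" using fD by (simp add: E'_def)
  have degeq: "deg E' w = deg E w" for w
  proof -
    have "deg E' w = (if w \<in> {v,x} then 1 else 0) + (if w \<in> {y,u} then 1 else 0)
       + (\<Sum>e\<in>D. if w \<in> e then 1 else 0)" using deg_sum[OF fE'] sumE' by simp
    moreover have "deg E w = (if w \<in> {u,v} then 1 else 0) + (if w \<in> {x,y} then 1 else 0)
       + (\<Sum>e\<in>D. if w \<in> e then 1 else 0)" using deg_sum[OF fE] sumE by simp
    ultimately show ?thesis using vx uvne xyne by auto
  qed
  have degfun: "deg E' = deg E" using degeq by auto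
  have cardE': "card E' = card E"
  proof -
    have "card E' = (\<Sum>e\<in>E'. 1)" by simp
    also have "\<dots> = 2 + card D" using sumE'[of "\<lambda>_. 1"] by simp
    also have "card E = 2 + card D" using sumE[of "\<lambda>_. 1"] by simp
    ultimately show ?thesis by simp
  qed
  have M2E': "M2 E' = M2 E + 2"
  proof -
    let ?g = "\<lambda>e. \<Prod>w\<in>e. deg E w"
    have "M2 E' = sum ?g E'" by (simp add: M2_def degfun)
    also have "\<dots> = ?g {v,x} + ?g {y,u} + sum ?g D" by (rule sumE')
    also have "?g {v,x} = 12" using vx dv dx by simp
    also have "?g {y,u} = 3" using vx dy du by simp
    finally have a: "M2 E' = 15 + sum ?g D" by simp
    have "M2 E = sum ?g E" by (simp add: M2_def)
    also have "\<dots> = ?g {u,v} + ?g {x,y} + sum ?g D" by (rule sumE)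
    also have "?g {u,v} = 4" using uvne dv du by simp
    also have "?g {x,y} = 9" using xyne dx dy by simp
    finally have b: "M2 E = 13 + sum ?g D" by simp
    show ?thesis using a b by simp
  qed
  let ?R = "(adj_rel (E - {{x,y}}))\<^sup>*"
  let ?R2 = "(adj_rel (E - {{x,y}} - {{v,u}}))\<^sup>*"
  let ?R' = "(adj_rel E')\<^sup>*"
  have D2: "E - {{x,y}} - {{v,u}} = D" by (auto simp: D_def insert_commute)
  have R2R': "(a,c) \<in> ?R2 \<Longrightarrow> (a,c) \<in> ?R'" for a c using adj_mono[OF DE'] D2 by simp
  have uiso: "\<forall>e\<in>D. u \<notin> e" using uedges by (auto simp: D_def)
  have xv': "(x,v) \<in> ?R'" by (rule r_into_rtrancl) (simp add: E'_def insert_commute)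
  have uy': "(u,y) \<in> ?R'" by (rule r_into_rtrancl) (simp add: E'_def insert_commute)
  have yv': "(y,v) \<in> ?R'"
  proof -
    have "(y,v) \<in> ?R" using adj_sym[OF vy] .
    from split_edge[OF this, of v u] have "(y,v) \<in> ?R2 \<or> (y,u) \<in> ?R2" by auto
    moreover have "(y,u) \<notin> ?R2"
    proof
      assume "(y,u) \<in> ?R2"
      then have "(y,u) \<in> (adj_rel D)\<^sup>*" using D2 by simp
      then have "(u,y) \<in> (adj_rel D)\<^sup>*" by (rule adj_sym)
      then have "y = u" using isolated[OF uiso] by blast
      then show False using vx by simp
    qed
    ultimately show ?thesis using R2R' by blast
  qed
  have uv': "(u,v) \<in> ?R'" using uy' yv' by (meson rtrancl_trans)
  have toV: "(w,v) \<in> ?R'" if "w \<in> V" for w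
  proof -
    have "(w,v) \<in> (adj_rel E)\<^sup>*" using con that inV by (auto simp: connected_graph_def)
    from split_edge[OF this, of x y] have "\<exists>t\<in>{v,x,y}. (w,t) \<in> ?R" by auto
    then obtain t where t: "t \<in> {v,x,y}" "(w,t) \<in> ?R" by blast
    from split_edge[OF t(2), of v u] have "\<exists>s\<in>{t,v,u}. (w,s) \<in> ?R2" by auto
    then obtain s where s: "s \<in> {v,x,y,u}" "(w,s) \<in> ?R2" using t by blast
    from s(1) have "s = v \<or> s = x \<or> s = y \<or> s = u" by simp
    then have "(s,v) \<in> ?R'" using xv' yv' uv' by (elim disjE) simp_all
    then show ?thesis using R2R'[OF s(2)] by (meson rtrancl_trans)
  qed
  have conE': "connected_graph V E'"
    unfolding connected_graph_def
  proof (intro ballI)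
    fix a c assume "a \<in> V" "c \<in> V"
    then have "(a,v) \<in> ?R'" "(v,c) \<in> ?R'" using toV adj_sym by blast+
    then show "(a,c) \<in> ?R'" by (rule rtrancl_trans)
  qed
  have subD: "\<forall>e\<in>D. e \<subseteq> V \<and> card e = 2" using sub DE by blast
  have c1: "card {v,x} = 2" using vx by simp
  have c2: "card {y,u} = 2" using vx(4) by (cases "y = u") auto
  have simpE': "simple_graph V E'"
    unfolding simple_graph_def E'_def using fV subD inV c1 c2 by simp
  have chE': "chemical_tree V E'" unfolding chemical_tree_def is_tree_def
    using simpE' Vne conE' cardE' cE d4 degfun by simp
  have "branching_vertices V E' = branching_vertices V E"
    unfolding branching_vertices_def degfun ..
  then have "(V,E') \<in> CT n b" unfolding CT_def using chE' cV cb by simp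
  then have "M2 E' \<le> M2 E" using opt by auto
  then show False using M2E' by simp
qed

theorem lemma11:
  fixes n b :: nat and V :: "nat set" and E :: "nat set set"
  assumes "1 \<le> b" and "real b < real n / 2 - 1"
    and "(V, E) \<in> CT n b"
    and "\<forall>(V', E') \<in> CT n b. M2 E' \<le> M2 E"
    and "\<exists>u v. {u, v} \<in> E \<and> deg E u = 1 \<and> deg E v = 4"
  shows "\<not> (\<exists>x y. {x, y} \<in> E \<and> deg E x = 3 \<and> deg E y = 3)"
proof
  assume "\<exists>x y. {x, y} \<in> E \<and> deg E x = 3 \<and> deg E y = 3"
  then obtain x y where xy: "{x,y} \<in> E" "deg E x = 3" "deg E y = 3" by blast
  obtain u v where uv: "{u,v} \<in> E" "deg E u = 1" "deg E v = 4" using assms(5) by blast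
  have T: "is_tree V E" using assms(3) by (simp add: CT_def chemical_tree_def)
  then have sub: "\<forall>e\<in>E. e \<subseteq> V" and con: "connected_graph V E"
    by (auto simp: is_tree_def simple_graph_def)
  have "v \<in> V" "x \<in> V" using sub uv xy by auto
  then have "(v,x) \<in> (adj_rel E)\<^sup>*" using con by (auto simp: connected_graph_def)
  from split_edge[OF this, of x y]
  have "(v,x) \<in> (adj_rel (E - {{x,y}}))\<^sup>* \<or> (v,y) \<in> (adj_rel (E - {{x,y}}))\<^sup>*" by auto
  then show False
  proof
    assume "(v,y) \<in> (adj_rel (E - {{x,y}}))\<^sup>*"
    then show False using core[OF assms(3,4) uv xy] by blast
  next
    assume "(v,x) \<in> (adj_rel (E - {{x,y}}))\<^sup>*"
    then have "(v,x) \<in> (adj_rel (E - {{y,x}}))\<^sup>*" by (simp add: insert_commute)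
    moreover have "{y,x} \<in> E" using xy by (simp add: insert_commute)
    ultimately show False using core[OF assms(3,4) uv] xy by blast
  qed
qed

end
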